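(* Let $m=2\ell$ be an even positive integer, and let $C^{(m)}=(c_{ij})$ be the $m\times m$ coloring matrix with $c_{ij}=1$ if $i+j\le m+1$, except that $c_{ij}=0$ when $i+j=m$ and both $i,j$ are odd; and $c_{ij}=0$ if $i+j>m+1$. Then for every $n\ge1$, $$t_{C^{(m)}}(n)=\frac{\ell}{n}\cdot2^{2n-1}\binom{\frac{\ell+1}{2}n-\frac{\ell}{2}-1}{n-1}.$$
   Context: A plane tree is an unlabeled rooted tree in which the children of every vertex are linearly ordered. A coloring matrix is an $m\times m$ matrix $A=(a_{ij})$ with entries in $\{0,1\}$. An $A$-coloring of a plane tree assigns to each vertex a color in $\{1,\dots,m\}$ such that whenever a vertex of color $j$ is a child of a vertex of color $i$, $a_{ij}=1$. Let $t_A(n)$ be the number of pairs (plane tree with $n$ vertices, $A$-coloring of it). For real $y$ and integer $k\ge0$, $\binom{y}{k}=y(y-1)\cdots(y-k+1)/k!$. *)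

theory Defs
  imports Complex_Main
begin

text \<open>An unlabeled plane tree is a
  \<open>unit ltree\<close>; an assignment of colours to its vertices is a
  \<open>nat ltree\<close> of the same shape.\<close>
datatype 'a ltree = LNode 'a "'a ltree list"

type_synonym plane_tree = "unit ltree"

fun label :: "'a ltree \<Rightarrow> 'a" where
  "label (LNode a ts) = a"

fun num_vertices :: "'a ltree \<Rightarrow> nat" where
  "num_vertices (LNode a ts) = Suc (sum_list (map num_vertices ts))"

definition shape :: "'a ltree \<Rightarrow> plane_tree" where
  "shape t = map_ltree (\<lambda>_. ()) t"

fun valid_col :: "nat \<Rightarrow> (nat \<Rightarrow> nat \<Rightarrow> bool) \<Rightarrow> nat ltree \<Rightarrow> bool" where
  "valid_col m A (LNode i ts) =
     (1 \<le> i \<and> i \<le> m \<and> (\<forall>t\<in>set ts. A i (label t) \<and> valid_col m A t))"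

definition is_A_coloring :: "nat \<Rightarrow> (nat \<Rightarrow> nat \<Rightarrow> bool) \<Rightarrow> plane_tree \<Rightarrow> nat ltree \<Rightarrow> bool" where
  "is_A_coloring m A T c \<longleftrightarrow> shape c = T \<and> valid_col m A c"

definition t_A :: "nat \<Rightarrow> (nat \<Rightarrow> nat \<Rightarrow> bool) \<Rightarrow> nat \<Rightarrow> nat" where
  "t_A m A n = card {(T, c). num_vertices T = n \<and> is_A_coloring m A T c}"

definition C_mat :: "nat \<Rightarrow> nat \<Rightarrow> nat \<Rightarrow> bool" where
  "C_mat m i j \<longleftrightarrow> i + j \<le> m + 1 \<and> \<not> (i + j = m \<and> odd i \<and> odd j)"

end

theory Submission
  imports Defs "HOL-Computational_Algebra.Formal_Laurent_Series"
begin


lemma res_inv_pow_deriv: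
  fixes y :: "real fps"
  assumes y0: "y $ 0 = 0" and y1: "y $ 1 \<noteq> 0" and d: "d \<ge> 1"
  shows "fls_residue (inverse (fps_to_fls y) ^ d * fls_deriv (fps_to_fls y)) = (if d = 1 then 1 else 0)"
proof -
  let ?Y = "fps_to_fls y"
  have sd: "subdegree y = 1" using y0 y1 by (intro subdegreeI) auto
  have sdY: "fls_subdegree ?Y = 1" using sd by (simp add: fls_subdegree_fls_to_fps)
  show ?thesis
  proof (cases "d = 1")
    case True
    then show ?thesis using fls_residue_deriv_times_inverse_eq_subdegree(2)[of ?Y] sdY by simp
  next
    case False
    define e where "e = d - 2"
    have e: "d = Suc (Suc e)" using d False unfolding e_def by arith
    have "fls_deriv (inverse ?Y ^ Suc e) = of_nat (Suc e) * inverse ?Y ^ e * (- fls_deriv ?Y * (inverse ?Y)\<^sup>2)"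
      by (simp only: fls_deriv_power fls_inverse_deriv diff_Suc_1)
    also have "\<dots> = - (fls_const (of_nat (Suc e)) * (inverse ?Y ^ d * fls_deriv ?Y))"
      by (simp add: e power2_eq_square algebra_simps fls_of_nat)
    finally have "fls_residue (- (fls_const (of_nat (Suc e)) * (inverse ?Y ^ d * fls_deriv ?Y))) = 0"
      by (metis fls_residue_deriv)
    then have "of_nat (Suc e) * fls_residue (inverse ?Y ^ d * fls_deriv ?Y) = 0"
      by (metis fls_residue_fls_const_times(1) fls_residue_def fls_uminus_nth neg_equal_0_iff_equal)
    then show ?thesis using False by simp
  qed
qed

lemma fps_cutoff_sum: "fps_cutoff n (P :: real fps) = (\<Sum>k<n. fps_const (P $ k) * fps_X ^ k)"
proof -
  have "(\<Sum>k<n. P $ k * (if i = k then 1 else 0)) = (if i < n then P $ i else 0)" for i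
  proof -
    have "\<And>k. P $ k * (if i = k then 1 else 0) = (if i = k then P $ i else 0)" by simp
    then show ?thesis by (simp add: sum.delta')
  qed
  then show ?thesis by (simp add: fps_eq_iff fps_sum_nth)
qed

lemma fps_to_fls_sum: "fps_to_fls (sum f A) = (\<Sum>k\<in>A. fps_to_fls (f k))"
  by (induction A rule: infinite_finite_induct) simp_all

lemma res_compose:
  fixes y P :: "real fps"
  assumes y0: "y $ 0 = 0" and y1: "y $ 1 \<noteq> 0" and n: "n \<ge> 1"
  shows "fls_residue (inverse (fps_to_fls y) ^ n * fps_to_fls ((P oo y) * fps_deriv y)) = P $ (n - 1)"
proof -
  let ?Y = "fps_to_fls y" and ?Yi = "inverse (fps_to_fls y)" and ?D = "fls_deriv (fps_to_fls y)"
  define R where "R = fps_shift n P"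
  have Yne: "?Y \<noteq> 0" using y1 by (auto simp: fps_eq_iff)
  have P: "P = fps_X ^ n * R + (\<Sum>k<n. fps_const (P $ k) * fps_X ^ k)"
    using fps_shift_cutoff'[of n P] by (simp add: R_def fps_cutoff_sum)
  have "P oo y = y ^ n * (R oo y) + (\<Sum>k<n. fps_const (P $ k) * y ^ k)"
    apply (subst P)
    by (simp add: fps_compose_add_distrib fps_compose_mult_distrib[OF y0] fps_compose_sum_distrib
        fps_compose_power[OF y0, symmetric] y0)
  then have "fps_to_fls ((P oo y) * fps_deriv y) =
      ?Y ^ n * fps_to_fls ((R oo y) * fps_deriv y) + (\<Sum>k<n. fls_const (P $ k) * ?Y ^ k * ?D)"
    by (simp add: fls_times_fps_to_fls fps_to_fls_sum fps_to_fls_power fls_deriv_fps_to_fls algebra_simps sum_distrib_right sum_distrib_left)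
  then have eqY: "?Yi ^ n * fps_to_fls ((P oo y) * fps_deriv y) =
      fps_to_fls ((R oo y) * fps_deriv y) + (\<Sum>k<n. fls_const (P $ k) * (?Yi ^ (n - k) * ?D))"
  proof -
    assume eq: "fps_to_fls ((P oo y) * fps_deriv y) =
      ?Y ^ n * fps_to_fls ((R oo y) * fps_deriv y) + (\<Sum>k<n. fls_const (P $ k) * ?Y ^ k * ?D)"
    have a: "?Yi ^ n * ?Y ^ n = 1" using Yne by (simp add: power_mult_distrib[symmetric])
    have a': "?Y ^ n * ?Yi ^ n = 1" using Yne by (simp add: power_mult_distrib[symmetric])
    have b: "?Yi ^ n * ?Y ^ k = ?Yi ^ (n - k)" if "k < n" for k
    proof -
      have "?Yi ^ n = ?Yi ^ (n - k) * ?Yi ^ k" using that by (simp add: power_add[symmetric])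
      then show ?thesis using Yne by (simp add: power_mult_distrib[symmetric] mult.assoc)
    qed
    show ?thesis unfolding eq
      by (simp add: distrib_left sum_distrib_left a a' mult.assoc[symmetric] b
            mult.commute[of "?Yi ^ n"] cong: sum.cong) (simp add: mult.assoc mult.left_commute b)
  qed
  have "fls_residue (?Yi ^ n * fps_to_fls ((P oo y) * fps_deriv y)) =
      (\<Sum>k<n. P $ k * (if n - k = 1 then 1 else 0))"
  proof -
    have r0: "fls_residue (fps_to_fls ((R oo y) * fps_deriv y)) = 0"
      by (simp add: fls_residue_power_series fls_subdegree_fls_to_fps_gt0 del: fls_residue_def)
    have rs: "fls_residue (\<Sum>k<n. fls_const (P $ k) * (?Yi ^ (n - k) * ?D)) =
        (\<Sum>k<n. fls_residue (fls_const (P $ k) * (?Yi ^ (n - k) * ?D)))"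
      by (simp add: fls_nth_sum)
    have rk: "fls_residue (fls_const (P $ k) * (?Yi ^ (n - k) * ?D)) = P $ k * (if n - k = 1 then 1 else 0)"
      if "k \<in> {..<n}" for k
      using res_inv_pow_deriv[OF y0 y1, of "n - k"] that
      by (simp only: fls_residue_fls_const_times) simp
    have rs2: "(\<Sum>k<n. fls_residue (fls_const (P $ k) * (?Yi ^ (n - k) * ?D))) = (\<Sum>k<n. P $ k * (if n - k = 1 then 1 else 0))"
      by (rule sum.cong) (simp_all only: rk)
    show ?thesis unfolding eqY fls_residue_add r0 rs rs2 by simp
  qed
  also have "\<dots> = P $ (n - 1)"
  proof -
    have "(\<Sum>k<n. P $ k * (if n - k = 1 then 1 else 0)) = (\<Sum>k\<in>{n-1}. P $ k)"
      using n by (intro sum.mono_neutral_cong_right) auto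
    then show ?thesis by simp
  qed
  finally show ?thesis .
qed

lemma lagrange:
  fixes y phi G :: "real fps"
  assumes y0: "y $ 0 = 0" and phi0: "phi $ 0 \<noteq> 0" and yeq: "y = fps_X * (phi oo y)" and n: "n \<ge> 1"
  shows "of_nat n * (G oo y) $ n = (fps_deriv G * phi ^ n) $ (n - 1)"
proof -
  define Q where "Q = fps_deriv G * phi ^ n"
  define a where "a = G oo y"
  have y1: "y $ 1 \<noteq> 0" using phi0 by (subst yeq) simp
  have Qy: "Q oo y = (fps_deriv G oo y) * (phi oo y) ^ n"
    unfolding Q_def by (simp add: fps_compose_mult_distrib[OF y0] fps_compose_power[OF y0])
  have da: "fps_deriv a = (fps_deriv G oo y) * fps_deriv y"
    unfolding a_def by (rule fps_compose_deriv[OF y0])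
  have yn: "y ^ n = fps_X ^ n * (phi oo y) ^ n"
    by (subst yeq) (simp add: power_mult_distrib)
  have key: "fps_X ^ n * ((Q oo y) * fps_deriv y) = y ^ n * fps_deriv a"
    unfolding Qy da yn by (simp add: algebra_simps)
  let ?Y = "fps_to_fls y" and ?Yi = "inverse (fps_to_fls y)"
  let ?A = "fps_to_fls (fps_deriv a)" and ?B = "fps_to_fls ((Q oo y) * fps_deriv y)"
  have Yne: "?Y \<noteq> 0" using y1 by (auto simp: fps_eq_iff)
  have key2: "fls_X_intpow (int n) * ?B = ?Y ^ n * ?A"
    using arg_cong[OF key, of fps_to_fls]
    by (simp add: fls_times_fps_to_fls fps_to_fls_power fls_X_power_conv_shift_1)
  have "?Yi ^ n * ?B = fls_X_intpow (- int n) * ?A"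
  proof -
    have xx: "fls_X_intpow (- int n) * fls_X_intpow (int n) = (1::real fls)"
      using fls_X_intpow_times_fls_X_intpow[of "- int n" "int n"] by simp
    have "fls_X_intpow (- int n) * (fls_X_intpow (int n) * ?B) = ?B"
      by (simp only: mult.assoc[symmetric] xx mult_1_left)
    then have "?Yi ^ n * ?B = ?Yi ^ n * (fls_X_intpow (- int n) * (fls_X_intpow (int n) * ?B))"
      by simp
    also have "\<dots> = ?Yi ^ n * (fls_X_intpow (- int n) * (?Y ^ n * ?A))" by (simp only: key2)
    also have "\<dots> = fls_X_intpow (- int n) * ((?Yi ^ n * ?Y ^ n) * ?A)" by (simp only: ac_simps)
    also have "?Yi ^ n * ?Y ^ n = 1" using Yne by (simp add: power_mult_distrib[symmetric])
    finally show ?thesis by simp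
  qed
  then have "fls_residue (fls_X_intpow (- int n) * ?A) = Q $ (n - 1)"
    using res_compose[OF y0 y1 n, of Q] by simp
  moreover have "fls_residue (fls_X_intpow (- int n) * ?A) = fps_deriv a $ (n - 1)"
  proof -
    have "fls_residue (fls_X_intpow (- int n) * ?A) = fls_nth ?A (int n - 1)"
      using fls_residue_shift_nth[of ?A "int n - 1"] by simp
    also have "\<dots> = fps_deriv a $ (n - 1)" using n by (simp add: nat_diff_distrib)
    finally show ?thesis .
  qed
  ultimately show ?thesis using n unfolding a_def Q_def by simp
qed



definition psi :: "nat \<Rightarrow> real fps" where
  "psi l = fps_X * fps_binomial (- ((real l + 1) / 2)) * fps_const (1/4)"
definition yy :: "nat \<Rightarrow> real fps" where "yy l = fps_inv (psi l)"
definition Bc :: "nat \<Rightarrow> real \<Rightarrow> real fps" where "Bc l c = fps_binomial c oo yy l"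

lemma yy0: "yy l $ 0 = 0"
  by (simp add: yy_def fps_inv_def)

lemma psi_props: "psi l $ 0 = 0" "psi l $ 1 \<noteq> 0"
  by (simp_all add: psi_def)

lemma Bc_mult: "Bc l a * Bc l b = Bc l (a + b)"
  by (simp add: Bc_def fps_binomial_add_mult fps_compose_mult_distrib[OF yy0])

lemma Bc_0: "Bc l 0 = 1"
  by (simp add: Bc_def)

lemma Bc_1: "Bc l 1 = 1 + yy l"
  by (simp add: Bc_def fps_binomial_1 fps_compose_add_distrib yy0)

lemma Bc_power: "Bc l a ^ k = Bc l (real k * a)"
  by (simp add: Bc_def fps_compose_power[OF yy0] fps_binomial_power)

lemma Bc_nth0: "Bc l a $ 0 = 1"
  by (simp add: Bc_def)

lemma yy_eq: "yy l * Bc l (- ((real l + 1) / 2)) = fps_const 4 * fps_X"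
proof -
  have "psi l oo yy l = fps_X"
    unfolding yy_def by (rule fps_inv_right[OF psi_props])
  moreover have "psi l oo yy l = yy l * Bc l (- ((real l + 1) / 2)) * fps_const (1/4)"
    by (simp add: psi_def Bc_def fps_compose_mult_distrib[OF yy0] yy0)
  ultimately have "yy l * Bc l (- ((real l + 1) / 2)) * fps_const (1/4) = fps_X" by simp
  then have "yy l * Bc l (- ((real l + 1) / 2)) * fps_const (1/4) * fps_const 4 = fps_X * fps_const 4" by simp
  moreover have "fps_const (1/4) * fps_const 4 = (1 :: real fps)" by (simp add: fps_const_mult)
  ultimately show ?thesis by (simp add: mult.assoc mult.commute[of fps_X])
qed

lemma yy_fix: "yy l = fps_X * ((fps_const 4 * fps_binomial ((real l + 1) / 2)) oo yy l)"
proof -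
  have "yy l = yy l * Bc l (- ((real l + 1) / 2)) * Bc l ((real l + 1) / 2)"
    by (simp add: mult.assoc Bc_mult Bc_0)
  also have "\<dots> = fps_const 4 * fps_X * Bc l ((real l + 1) / 2)"
    by (simp only: yy_eq)
  also have "\<dots> = fps_X * ((fps_const 4 * fps_binomial ((real l + 1) / 2)) oo yy l)"
    by (simp add: Bc_def fps_compose_mult_distrib[OF yy0] algebra_simps)
  finally show ?thesis .
qed

lemma deriv_binomial: "fps_deriv (fps_binomial c) = fps_const c * fps_binomial (c - 1)"
proof -
  have "fps_const c * fps_binomial c / (1 + fps_X) = fps_const c * fps_binomial c * fps_binomial (-1)"
    by (simp add: fps_divide_unit fps_binomial_minus_one)
  then show ?thesis
    by (simp add: fps_binomial_deriv fps_binomial_add_mult[symmetric] mult.assoc)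
qed

lemma coeff_main:
  assumes n: "n \<ge> 1"
  shows "real n * Bc l (- (real l / 2)) $ n =
     - (real l / 2) * 4 ^ n * ((real n * ((real l + 1) / 2) - real l / 2 - 1) gchoose (n - 1))"
proof -
  have "real n * Bc l (- (real l / 2)) $ n =
     (fps_deriv (fps_binomial (- (real l / 2))) * (fps_const 4 * fps_binomial ((real l + 1) / 2)) ^ n) $ (n - 1)"
    unfolding Bc_def
    by (rule lagrange[OF yy0 _ yy_fix n]) simp
  also have "(fps_deriv (fps_binomial (- (real l / 2))) * (fps_const 4 * fps_binomial ((real l + 1) / 2)) ^ n)
     = fps_const (- (real l / 2) * 4 ^ n) * fps_binomial (real n * ((real l + 1) / 2) - real l / 2 - 1)"
    by (simp add: deriv_binomial power_mult_distrib fps_binomial_power fps_const_power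
         mult.assoc mult.left_commute[of "fps_binomial _"] fps_binomial_add_mult[symmetric] algebra_simps)
  finally show ?thesis by simp
qed

definition vv :: "nat \<Rightarrow> real fps" where "vv l = Bc l (- 1/2)"
definition hh :: "nat \<Rightarrow> nat \<Rightarrow> real fps" where
  "hh l p = fps_const (1/2) * (vv l ^ (p - 1) - vv l ^ p)"
definition GG :: "nat \<Rightarrow> nat \<Rightarrow> real fps" where "GG l i = hh l ((i + 1) div 2)"

lemma vv_power: "vv l ^ k = Bc l (- (real k / 2))"
  by (simp add: vv_def Bc_power)

lemma vv_rel:
  assumes "l \<ge> 1"
  shows "vv l ^ (l - 1) * (1 - vv l ^ 2) = fps_const 4 * fps_X"
proof -
  have b1: "1 - Bc l (-1) = yy l * Bc l (-1)"
  proof -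
    have "Bc l 1 * Bc l (-1) = 1" by (simp add: Bc_mult Bc_0)
    then show ?thesis by (simp add: Bc_1 algebra_simps)
  qed
  have "vv l ^ (l - 1) * (1 - vv l ^ 2) = Bc l (- (real (l - 1) / 2)) * (yy l * Bc l (-1))"
    by (simp add: vv_power b1)
  also have "\<dots> = yy l * Bc l (- ((real l + 1) / 2))"
  proof -
    have e: "- (real (l - 1) / 2) + -1 = - ((real l + 1) / 2)" using assms by (simp add: of_nat_diff field_simps)
    have "Bc l (- (real (l - 1) / 2)) * (yy l * Bc l (-1)) = yy l * (Bc l (- (real (l - 1) / 2)) * Bc l (-1))"
      by (simp only: ac_simps)
    also have "\<dots> = yy l * Bc l (- ((real l + 1) / 2))" by (simp only: Bc_mult e)
    finally show ?thesis .
  qed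
  also have "\<dots> = fps_const 4 * fps_X" by (rule yy_eq)
  finally show ?thesis .
qed

lemma sum_GG: "sum (GG l) {1..2*q} = 1 - vv l ^ q"
proof (induction q)
  case 0
  then show ?case by simp
next
  case (Suc q)
  have "{1..2 * Suc q} = insert (2*q+2) (insert (2*q+1) {1..2*q})" by auto
  then have "sum (GG l) {1..2 * Suc q} = GG l (2*q+2) + GG l (2*q+1) + sum (GG l) {1..2*q}"
    by simp
  also have "GG l (2*q+2) = hh l (Suc q)" by (simp add: GG_def)
  also have "GG l (2*q+1) = hh l (Suc q)" by (simp add: GG_def)
  finally have "sum (GG l) {1..2 * Suc q} = (hh l (Suc q) + hh l (Suc q)) + (1 - vv l ^ q)"
    using Suc.IH by (simp add: add.assoc)
  moreover have "hh l (Suc q) + hh l (Suc q) = vv l ^ q - vv l ^ Suc q"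
  proof -
    have "hh l (Suc q) + hh l (Suc q) = (fps_const (1/2) + fps_const (1/2)) * (vv l ^ q - vv l ^ Suc q)"
      unfolding hh_def by (simp only: distrib_right diff_Suc_1)
    also have "fps_const (1/2) + fps_const (1/2) = (1 :: real fps)"
      using fps_const_add[of "1/2" "1/2::real"] by simp
    finally show ?thesis by simp
  qed
  ultimately show ?case by simp
qed

lemma half_alg:
  fixes v c :: "real fps"
  assumes "c + c = 1"
  shows "c * (v ^ a - v ^ Suc a) * (v ^ b - c * (v ^ b - v ^ Suc b)) = c * c * (v ^ (a + b) * (1 - v ^ 2))"
proof -
  have "v ^ b - c * (v ^ b - v ^ Suc b) = (c + c) * v ^ b - c * (v ^ b - v ^ Suc b)" using assms by simp
  also have "\<dots> = c * (v ^ b * (1 + v))" by (simp add: algebra_simps)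
  finally have 1: "v ^ b - c * (v ^ b - v ^ Suc b) = c * (v ^ b * (1 + v))" .
  have 2: "v ^ a - v ^ Suc a = v ^ a * (1 - v)" by (simp add: algebra_simps)
  show ?thesis unfolding 1 2 by (simp add: power_add power2_eq_square algebra_simps)
qed

lemma Jset:
  fixes i l :: nat
  assumes "1 \<le> i" "i \<le> 2 * l"
  defines "p \<equiv> (i + 1) div 2"
  defines "e \<equiv> (if even i then 2 * (l + 1 - p) - 1 else 2 * (l + 1 - p))"
  shows "{j \<in> {1..2*l}. C_mat (2*l) i j} = insert e {1..2 * (l - p)}"
    and "e \<notin> {1..2 * (l - p)}" and "(e + 1) div 2 = l + 1 - p"
proof -
  show "{j \<in> {1..2*l}. C_mat (2*l) i j} = insert e {1..2 * (l - p)}"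
  proof (cases "even i")
    case True
    then obtain q where q: "i = 2 * q" by blast
    then have "p = q" unfolding p_def by simp
    then show ?thesis using assms(1,2) True q unfolding e_def C_mat_def by (auto; presburger)
  next
    case False
    then obtain q where q: "i = 2 * q + 1" using oddE by blast
    then have "p = q + 1" unfolding p_def by simp
    then show ?thesis using assms(1,2) False q unfolding e_def C_mat_def by (auto; presburger)
  qed
  show "e \<notin> {1..2 * (l - p)}" using assms(1,2) unfolding e_def p_def by auto
  show "(e + 1) div 2 = l + 1 - p" using assms(1,2) unfolding e_def p_def by auto
qed

lemma GG_sys:
  fixes i l :: nat
  assumes l: "l \<ge> 1" and i: "1 \<le> i" "i \<le> 2 * l"
  shows "GG l i * (1 - sum (GG l) {j \<in> {1..2*l}. C_mat (2*l) i j}) = fps_X"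
proof -
  define p where "p = (i + 1) div 2"
  define e where "e = (if even i then 2 * (l + 1 - p) - 1 else 2 * (l + 1 - p))"
  have p1: "1 \<le> p" "p \<le> l" using i unfolding p_def by auto
  note J = Jset[OF i, folded p_def, folded e_def]
  have "sum (GG l) {j \<in> {1..2*l}. C_mat (2*l) i j} = GG l e + sum (GG l) {1..2 * (l - p)}"
    unfolding J(1) using J(2) by simp
  also have "\<dots> = hh l (l + 1 - p) + (1 - vv l ^ (l - p))"
    unfolding sum_GG GG_def J(3) ..
  finally have S: "1 - sum (GG l) {j \<in> {1..2*l}. C_mat (2*l) i j} = vv l ^ (l - p) - hh l (Suc (l - p))"
    using p1 by (simp add: Suc_diff_le)
  define a where "a = p - 1"
  define b where "b = l - p"
  have ab: "a + b = l - 1" "p = Suc a" using p1 unfolding a_def b_def by auto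
  have c: "fps_const (1/2) + fps_const (1/2) = (1 :: real fps)"
    using fps_const_add[of "1/2" "1/2::real"] by simp
  have cc: "fps_const (1/2) * fps_const (1/2) = (fps_const (1/4) :: real fps)"
    by (simp add: fps_const_mult)
  have "GG l i * (1 - sum (GG l) {j \<in> {1..2*l}. C_mat (2*l) i j})
      = fps_const (1/2) * (vv l ^ a - vv l ^ Suc a) * (vv l ^ b - fps_const (1/2) * (vv l ^ b - vv l ^ Suc b))"
    unfolding S GG_def p_def[symmetric] hh_def b_def[symmetric] using ab by simp
  also have "\<dots> = fps_const (1/4) * (vv l ^ (l - 1) * (1 - vv l ^ 2))"
    unfolding half_alg[OF c] cc ab ..
  also have "\<dots> = fps_X" using vv_rel[OF l] by (simp add: mult.assoc[symmetric] fps_const_mult)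
  finally show ?thesis .
qed

lemma GG0: "GG l i $ 0 = 0"
  by (simp add: GG_def hh_def vv_def Bc_nth0 fps_nth_power_0)



lemma sys_unique:
  fixes F G :: "nat \<Rightarrow> real fps" and J :: "nat \<Rightarrow> nat set" and I :: "nat set"
  assumes JI: "\<And>i. i \<in> I \<Longrightarrow> J i \<subseteq> I"
    and F0: "\<And>i. i \<in> I \<Longrightarrow> F i $ 0 = 0" and G0: "\<And>i. i \<in> I \<Longrightarrow> G i $ 0 = 0"
    and Fs: "\<And>i. i \<in> I \<Longrightarrow> F i * (1 - sum F (J i)) = fps_X"
    and Gs: "\<And>i. i \<in> I \<Longrightarrow> G i * (1 - sum G (J i)) = fps_X"
  shows "\<And>i. i \<in> I \<Longrightarrow> F i = G i"
proof -
  have Fe: "F i = fps_X + F i * sum F (J i)" if "i \<in> I" for i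
    using Fs[OF that] by (simp add: algebra_simps)
  have Ge: "G i = fps_X + G i * sum G (J i)" if "i \<in> I" for i
    using Gs[OF that] by (simp add: algebra_simps)
  have main: "\<forall>i\<in>I. \<forall>k\<le>n. F i $ k = G i $ k" for n
  proof (induction n)
    case 0
    then show ?case using F0 G0 by simp
  next
    case (Suc n)
    have SF0: "sum F (J i) $ 0 = 0" "sum G (J i) $ 0 = 0" if "i \<in> I" for i
      using F0 G0 JI[OF that] by (auto simp: fps_sum_nth intro!: sum.neutral)
    have Sk: "sum F (J i) $ k = sum G (J i) $ k" if "i \<in> I" "k \<le> n" for i k
      using Suc.IH JI[OF that(1)] that(2) by (auto simp: fps_sum_nth intro!: sum.cong)
    have step: "F i $ Suc n = G i $ Suc n" if i: "i \<in> I" for i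
    proof -
      have "(F i * sum F (J i)) $ Suc n = (G i * sum G (J i)) $ Suc n"
        unfolding fps_mult_nth
      proof (rule sum.cong[OF refl])
        fix a assume a: "a \<in> {0..Suc n}"
        show "F i $ a * sum F (J i) $ (Suc n - a) = G i $ a * sum G (J i) $ (Suc n - a)"
        proof (cases "a = 0")
          case True then show ?thesis using F0[OF i] G0[OF i] by simp
        next
          case False
          show ?thesis
          proof (cases "a = Suc n")
            case True then show ?thesis using SF0[OF i] by simp
          next
            case False2: False
            then have "a \<le> n" "Suc n - a \<le> n" using a False by auto
            then show ?thesis using Suc.IH i Sk[OF i] by auto
          qed
        qed
      qed
      then show ?thesis by (subst Fe[OF i], subst Ge[OF i]) simp
    qed
    show ?case using Suc.IH step by (auto simp: le_Suc_eq)
  qed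
  fix i assume "i \<in> I"
  then show "F i = G i" using main by (auto simp: fps_eq_iff)
qed



definition trees :: "nat \<Rightarrow> (nat \<Rightarrow> nat \<Rightarrow> bool) \<Rightarrow> nat \<Rightarrow> nat \<Rightarrow> nat ltree set" where
  "trees m A n i = {c. valid_col m A c \<and> num_vertices c = n \<and> label c = i}"
definition forests :: "nat \<Rightarrow> (nat \<Rightarrow> nat \<Rightarrow> bool) \<Rightarrow> nat \<Rightarrow> nat \<Rightarrow> nat ltree list set" where
  "forests m A i n = {ts. (\<forall>t\<in>set ts. valid_col m A t \<and> A i (label t)) \<and> sum_list (map num_vertices ts) = n}"

lemma nv_pos: "num_vertices t \<ge> 1"
  by (cases t) simp

lemma nv_ne0[simp]: "num_vertices t \<noteq> 0"
  by (cases t) simp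

lemma trees_0: "trees m A 0 i = {}"
  by (simp add: trees_def)

lemma trees_Suc: "trees m A (Suc n) i = (if 1 \<le> i \<and> i \<le> m then LNode i ` forests m A i n else {})"
proof (intro set_eqI iffI)
  fix c assume "c \<in> trees m A (Suc n) i"
  then show "c \<in> (if 1 \<le> i \<and> i \<le> m then LNode i ` forests m A i n else {})"
    by (cases c) (auto simp: trees_def forests_def)
next
  fix c assume "c \<in> (if 1 \<le> i \<and> i \<le> m then LNode i ` forests m A i n else {})"
  then show "c \<in> trees m A (Suc n) i"
    by (auto simp: trees_def forests_def split: if_splits)
qed

lemma sum_list_nv_0: "sum_list (map num_vertices ts) = 0 \<longleftrightarrow> ts = []"
  by (cases ts) auto

lemma forests_0: "forests m A i 0 = {[]}"
  by (auto simp: forests_def sum_list_nv_0)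

lemma forests_Suc: "forests m A i (Suc n) =
  (\<Union>a\<in>{1..Suc n}. \<Union>j\<in>{j\<in>{1..m}. A i j}. (\<lambda>(t, ts). t # ts) ` (trees m A a j \<times> forests m A i (Suc n - a)))"
proof (intro set_eqI iffI)
  fix ts assume ts: "ts \<in> forests m A i (Suc n)"
  then obtain t ts' where tts: "ts = t # ts'"
    by (cases ts) (auto simp: forests_def)
  have vt: "valid_col m A t" "A i (label t)" using ts tts by (auto simp: forests_def)
  have lab: "1 \<le> label t \<and> label t \<le> m" using vt(1) by (cases t) auto
  have nvt: "1 \<le> num_vertices t" "num_vertices t \<le> Suc n" using ts tts nv_pos[of t] by (auto simp: forests_def)
  show "ts \<in> (\<Union>a\<in>{1..Suc n}. \<Union>j\<in>{j\<in>{1..m}. A i j}. (\<lambda>(t, ts). t # ts) ` (trees m A a j \<times> forests m A i (Suc n - a)))"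
    apply (rule UN_I[of "num_vertices t"])
    using nvt apply simp
    apply (rule UN_I[of "label t"])
    using lab vt apply simp
    apply (rule image_eqI[of _ _ "(t, ts')"])
    using tts ts vt by (auto simp: trees_def forests_def)
next
  fix ts assume "ts \<in> (\<Union>a\<in>{1..Suc n}. \<Union>j\<in>{j\<in>{1..m}. A i j}. (\<lambda>(t, ts). t # ts) ` (trees m A a j \<times> forests m A i (Suc n - a)))"
  then show "ts \<in> forests m A i (Suc n)"
    by (auto simp: trees_def forests_def)
qed

lemma finite_forests: "finite (forests m A i n)"
proof (induction n arbitrary: i rule: less_induct)
  case (less n)
  show ?case
  proof (cases n)
    case 0 then show ?thesis by (simp add: forests_0)
  next
    case (Suc k)
    have ft: "finite (trees m A a j)" if "a \<le> Suc k" for a j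
    proof (cases a)
      case 0 then show ?thesis by (simp add: trees_0)
    next
      case (Suc b) then show ?thesis using less Suc that \<open>n = Suc k\<close> by (simp add: trees_Suc)
    qed
    show ?thesis unfolding Suc forests_Suc
      using ft less Suc by (auto intro!: finite_imageI finite_cartesian_product)
  qed
qed

lemma finite_trees: "finite (trees m A n i)"
  by (cases n) (simp_all add: trees_0 trees_Suc finite_forests)

lemma card_trees_Suc: "card (trees m A (Suc n) i) = (if 1 \<le> i \<and> i \<le> m then card (forests m A i n) else 0)"
  by (simp add: trees_Suc card_image inj_on_def)

lemma card_forests_Suc: "card (forests m A i (Suc n)) =
  (\<Sum>a\<in>{1..Suc n}. \<Sum>j\<in>{j\<in>{1..m}. A i j}. card (trees m A a j) * card (forests m A i (Suc n - a)))"
proof -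
  have inj: "inj_on (\<lambda>(t, ts). t # ts) X" for X :: "(nat ltree \<times> nat ltree list) set"
    by (auto simp: inj_on_def)
  have c1: "card ((\<lambda>(t, ts). t # ts) ` (trees m A a j \<times> forests m A i (Suc n - a))) =
     card (trees m A a j) * card (forests m A i (Suc n - a))" for a j
    by (simp add: card_image[OF inj] card_cartesian_product)
  have d1: "((\<lambda>(t, ts). t # ts) ` (trees m A a j \<times> forests m A i (Suc n - a))) \<inter>
            ((\<lambda>(t, ts). t # ts) ` (trees m A a j' \<times> forests m A i (Suc n - a))) = {}" if "j \<noteq> j'" for a j j'
    using that by (auto simp: trees_def)
  have d2: "(\<Union>j\<in>{j\<in>{1..m}. A i j}. (\<lambda>(t, ts). t # ts) ` (trees m A a j \<times> forests m A i (Suc n - a))) \<inter>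
            (\<Union>j\<in>{j\<in>{1..m}. A i j}. (\<lambda>(t, ts). t # ts) ` (trees m A a' j \<times> forests m A i (Suc n - a'))) = {}"
    if "a \<noteq> a'" for a a'
    using that by (auto simp: trees_def)
  show ?thesis
    unfolding forests_Suc
    apply (subst card_UN_disjoint)
      apply simp
     apply (auto intro!: finite_imageI finite_cartesian_product finite_trees finite_forests)[1]
    using d2 apply blast
    apply (rule sum.cong[OF refl])
    apply (subst card_UN_disjoint)
      apply simp
     apply (auto intro!: finite_imageI finite_cartesian_product finite_trees finite_forests)[1]
    using d1 apply blast
    using c1 by simp
qed



definition Fc :: "nat \<Rightarrow> (nat \<Rightarrow> nat \<Rightarrow> bool) \<Rightarrow> nat \<Rightarrow> real fps" where
  "Fc m A i = Abs_fps (\<lambda>n. real (card (trees m A n i)))"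
definition Fo :: "nat \<Rightarrow> (nat \<Rightarrow> nat \<Rightarrow> bool) \<Rightarrow> nat \<Rightarrow> real fps" where
  "Fo m A i = Abs_fps (\<lambda>n. real (card (forests m A i n)))"

lemma Fc0: "Fc m A i $ 0 = 0"
  by (simp add: Fc_def trees_0)

lemma Fo_eq: "Fo m A i = 1 + sum (Fc m A) {j\<in>{1..m}. A i j} * Fo m A i"
proof (subst fps_eq_iff, intro allI)
  fix n
  let ?S = "sum (Fc m A) {j\<in>{1..m}. A i j}"
  have S0: "?S $ 0 = 0" by (simp add: fps_sum_nth Fc0)
  show "Fo m A i $ n = (1 + ?S * Fo m A i) $ n"
  proof (cases n)
    case 0
    then show ?thesis using S0 by (simp add: Fo_def forests_0)
  next
    case (Suc k)
    have "(?S * Fo m A i) $ Suc k = (\<Sum>a = 0..Suc k. ?S $ a * Fo m A i $ (Suc k - a))"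
      by (simp add: fps_mult_nth)
    also have "\<dots> = (\<Sum>a = 1..Suc k. ?S $ a * Fo m A i $ (Suc k - a))"
      using S0 by (simp add: sum.atLeast_Suc_atMost)
    also have "\<dots> = (\<Sum>a = 1..Suc k. \<Sum>j\<in>{j\<in>{1..m}. A i j}. real (card (trees m A a j)) * real (card (forests m A i (Suc k - a))))"
      by (simp add: fps_sum_nth Fc_def Fo_def sum_distrib_right)
    also have "\<dots> = Fo m A i $ Suc k"
      by (simp add: Fo_def card_forests_Suc)
    finally show ?thesis using Suc by simp
  qed
qed

lemma Fc_eq:
  assumes "1 \<le> i" "i \<le> m"
  shows "Fc m A i = fps_X * Fo m A i"
proof (subst fps_eq_iff, intro allI)
  fix n
  show "Fc m A i $ n = (fps_X * Fo m A i) $ n"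
  proof (cases n)
    case 0
    then show ?thesis by (simp add: Fc0)
  next
    case (Suc k)
    then show ?thesis using assms by (simp add: Fc_def Fo_def card_trees_Suc)
  qed
qed

lemma Fc_sys:
  assumes "1 \<le> i" "i \<le> m"
  shows "Fc m A i * (1 - sum (Fc m A) {j\<in>{1..m}. A i j}) = fps_X"
proof -
  have "Fc m A i * (1 - sum (Fc m A) {j\<in>{1..m}. A i j}) =
     fps_X * (Fo m A i - sum (Fc m A) {j\<in>{1..m}. A i j} * Fo m A i)"
    by (simp add: Fc_eq[OF assms] algebra_simps)
  also have "Fo m A i - sum (Fc m A) {j\<in>{1..m}. A i j} * Fo m A i = 1"
    using Fo_eq[of m A i] by (simp add: algebra_simps)
  finally show ?thesis by simp
qed

lemma nv_map: "num_vertices (map_ltree f t) = num_vertices t"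
  by (induction t) (simp add: comp_def cong: map_cong)

lemma t_A_sum: "t_A m A n = (\<Sum>i\<in>{1..m}. card (trees m A n i))"
proof -
  have "{(T, c). num_vertices T = n \<and> is_A_coloring m A T c} = (\<lambda>c. (shape c, c)) ` {c. valid_col m A c \<and> num_vertices c = n}"
    by (auto simp: is_A_coloring_def shape_def nv_map)
  then have "t_A m A n = card {c. valid_col m A c \<and> num_vertices c = n}"
    unfolding t_A_def by (simp add: card_image inj_on_def)
  also have "{c. valid_col m A c \<and> num_vertices c = n} = (\<Union>i\<in>{1..m}. trees m A n i)"
  proof (intro set_eqI iffI)
    fix c assume "c \<in> {c. valid_col m A c \<and> num_vertices c = n}"
    then show "c \<in> (\<Union>i\<in>{1..m}. trees m A n i)"
      by (cases c) (auto simp: trees_def)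
  qed (auto simp: trees_def)
  also have "card \<dots> = (\<Sum>i\<in>{1..m}. card (trees m A n i))"
    apply (rule card_UN_disjoint)
    apply simp
    apply (simp add: finite_trees)
    apply (auto simp: trees_def)
    done
  finally show ?thesis .
qed

theorem theorem38:
  fixes l n :: nat
  assumes "l \<ge> 1" and "n \<ge> 1"
  shows "real (t_A (2 * l) (C_mat (2 * l)) n) =
    real l / real n * 2 ^ (2 * n - 1) *
    (((real l + 1) / 2 * real n - real l / 2 - 1) gchoose (n - 1))"
proof -
  let ?m = "2 * l" and ?A = "C_mat (2 * l)"
  have eq: "Fc ?m ?A i = GG l i" if "i \<in> {1..?m}" for i
  proof (rule sys_unique[where F = "Fc ?m ?A" and G = "GG l" and I = "{1..?m}" and J = "\<lambda>i. {j\<in>{1..?m}. ?A i j}", OF _ _ _ _ _ that])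
    show "\<And>i. i \<in> {1..?m} \<Longrightarrow> {j\<in>{1..?m}. ?A i j} \<subseteq> {1..?m}" by auto
    show "\<And>i. Fc ?m ?A i $ 0 = 0" by (rule Fc0)
    show "\<And>i. GG l i $ 0 = 0" by (rule GG0)
    show "\<And>i. i \<in> {1..?m} \<Longrightarrow> Fc ?m ?A i * (1 - sum (Fc ?m ?A) {j\<in>{1..?m}. ?A i j}) = fps_X"
      by (rule Fc_sys) auto
    show "\<And>i. i \<in> {1..?m} \<Longrightarrow> GG l i * (1 - sum (GG l) {j\<in>{1..?m}. ?A i j}) = fps_X"
      by (rule GG_sys[OF assms(1)]) auto
  qed
  have "real (t_A ?m ?A n) = (\<Sum>i\<in>{1..?m}. Fc ?m ?A i $ n)"
    by (simp add: t_A_sum Fc_def)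
  also have "\<dots> = (\<Sum>i\<in>{1..?m}. GG l i) $ n"
    by (simp add: eq fps_sum_nth)
  also have "\<dots> = - (Bc l (- (real l / 2)) $ n)"
    unfolding sum_GG vv_power using assms(2) by simp
  also have "\<dots> = real l / 2 * 4 ^ n * ((real n * ((real l + 1) / 2) - real l / 2 - 1) gchoose (n - 1)) / real n"
  proof -
    have gen: "\<And>x c::real. real n * x = - c \<Longrightarrow> - x = c / real n"
      using assms(2) by (simp add: field_simps)
    show ?thesis
      by (rule gen) (simp only: coeff_main[OF assms(2), of l] mult_minus_left)
  qed
  also have "\<dots> = real l / real n * 2 ^ (2 * n - 1) *
    (((real l + 1) / 2 * real n - real l / 2 - 1) gchoose (n - 1))"
  proof -
    have e4: "(4::real) ^ n = 2 * 2 ^ (2 * n - 1)"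
    proof -
      have "(4::real) ^ n = 2 ^ (2 * n)" by (simp add: power_mult)
      also have "2 * n = Suc (2 * n - 1)" using assms(2) by simp
      finally show ?thesis by simp
    qed
    have ea: "real n * ((real l + 1) / 2) - real l / 2 - 1 = (real l + 1) / 2 * real n - real l / 2 - 1"
      by (simp only: mult.commute)
    have gen: "\<And>P g::real. real l / 2 * (2 * P) * g / real n = real l / real n * P * g"
      by (simp add: field_simps)
    show ?thesis unfolding e4 ea by (rule gen)
  qed
  finally show ?thesis .
qed

end
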